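(* Let $(R,\mathfrak m)$ be a regular local ring with $\dim R\ge 2$, let $\{(R_i,\mathfrak m_i)\}_{i\ge 0}$ be an infinite sequence of local quadratic transforms with $R_0=R$, and let $S=\bigcup_{i\ge0}R_i$. The following are equivalent: (1) $S$ is dominated by a DVR; (2) $S$ is a DVR; (3) $S$ is a Noetherian ring.
   Context: A local quadratic transform of a regular local ring $(A,\mathfrak n)$ is a local ring $A[\mathfrak n/x]_{\mathfrak q}$ with $x\in\mathfrak n\setminus\mathfrak n^2$ and $\mathfrak q$ a prime ideal of $A[\mathfrak n/x]$ containing $\mathfrak n$. The sequence satisfies: for each $i\ge 0$, $R_{i+1}$ is a local quadratic transform of $R_i$, $R_i\subsetneq R_{i+1}$, and each $R_i$ is a regular local ring of dimension at least $2$ with maximal ideal $\mathfrak m_i$. $S$ is local with maximal ideal $\bigcup_i\mathfrak m_i$; a local ring $(D,\mathfrak M_D)$ dominates $S$ if $S\subseteq D$ and $\mathfrak M_D\cap S$ is the maximal ideal of $S$. *)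

theory Defs
  imports Main "HOL-Library.Extended_Nat"
begin

text \<open>All rings considered are subrings of an ambient field of type 'a
(local quadratic transforms of a domain live in its fraction field).\<close>

definition subring :: "'a::field set \<Rightarrow> bool" where
  "subring A \<longleftrightarrow> 0 \<in> A \<and> 1 \<in> A \<and>
     (\<forall>x\<in>A. \<forall>y\<in>A. x + y \<in> A \<and> x * y \<in> A \<and> - x \<in> A)"

definition ideal_of :: "'a::field set \<Rightarrow> 'a set \<Rightarrow> bool" where
  "ideal_of A I \<longleftrightarrow> I \<subseteq> A \<and> 0 \<in> I \<and> (\<forall>x\<in>I. \<forall>y\<in>I. x + y \<in> I)
     \<and> (\<forall>a\<in>A. \<forall>x\<in>I. a * x \<in> I)"

definition max_ideal :: "'a::field set \<Rightarrow> 'a set \<Rightarrow> bool" where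
  "max_ideal A I \<longleftrightarrow> ideal_of A I \<and> I \<noteq> A \<and>
     (\<forall>J. ideal_of A J \<and> I \<subseteq> J \<and> J \<noteq> A \<longrightarrow> J = I)"

definition prime_ideal :: "'a::field set \<Rightarrow> 'a set \<Rightarrow> bool" where
  "prime_ideal A P \<longleftrightarrow> ideal_of A P \<and> P \<noteq> A \<and>
     (\<forall>a\<in>A. \<forall>b\<in>A. a * b \<in> P \<longrightarrow> a \<in> P \<or> b \<in> P)"

definition local_ring :: "'a::field set \<Rightarrow> bool" where
  "local_ring A \<longleftrightarrow> subring A \<and> (\<exists>!I. max_ideal A I)"

definition maxideal :: "'a::field set \<Rightarrow> 'a set" where
  "maxideal A = (THE I. max_ideal A I)"

definition span :: "'a::field set \<Rightarrow> 'a set \<Rightarrow> 'a set" where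
  "span A X = {\<Sum>x\<in>F. c x * x | F c. finite F \<and> F \<subseteq> X \<and> (\<forall>x\<in>F. c x \<in> A)}"

definition noetherian :: "'a::field set \<Rightarrow> bool" where
  "noetherian A \<longleftrightarrow> subring A \<and>
     (\<forall>I. ideal_of A I \<longrightarrow> (\<exists>F. finite F \<and> F \<subseteq> I \<and> I = span A F))"

definition krull_dim :: "'a::field set \<Rightarrow> enat" where
  "krull_dim A = Sup {enat n | n. \<exists>p :: nat \<Rightarrow> 'a set.
      (\<forall>i\<le>n. prime_ideal A (p i)) \<and> (\<forall>i<n. p i \<subset> p (Suc i))}"

definition regular_local :: "'a::field set \<Rightarrow> bool" where
  "regular_local A \<longleftrightarrow> noetherian A \<and> local_ring A \<and>
     (\<exists>d F. krull_dim A = enat d \<and> finite F \<and> F \<subseteq> A \<and> card F \<le> d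
            \<and> span A F = maxideal A)"

definition ring_adj :: "'a::field set \<Rightarrow> 'a set \<Rightarrow> 'a set" where
  "ring_adj A X = \<Inter>{B. subring B \<and> A \<union> X \<subseteq> B}"

definition localize :: "'a::field set \<Rightarrow> 'a set \<Rightarrow> 'a set" where
  "localize B q = {b / c | b c. b \<in> B \<and> c \<in> B \<and> c \<notin> q}"

text \<open>T = A[n/x]_q with x in n minus n^2 and q a prime of A[n/x] containing n.\<close>
definition local_quadratic_transform :: "'a::field set \<Rightarrow> 'a set \<Rightarrow> bool" where
  "local_quadratic_transform A T \<longleftrightarrow>
     (\<exists>x q. x \<in> maxideal A \<and>
        x \<notin> span A {y * z | y z. y \<in> maxideal A \<and> z \<in> maxideal A} \<and>
        prime_ideal (ring_adj A ((\<lambda>y. y / x) ` maxideal A)) q \<and>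
        maxideal A \<subseteq> q \<and>
        T = localize (ring_adj A ((\<lambda>y. y / x) ` maxideal A)) q)"

definition frac :: "'a::field set \<Rightarrow> 'a set" where
  "frac D = {a / b | a b. a \<in> D \<and> b \<in> D \<and> b \<noteq> 0}"

definition DVR :: "'a::field set \<Rightarrow> bool" where
  "DVR D \<longleftrightarrow> subring D \<and>
     (\<exists>v :: 'a \<Rightarrow> int.
        (\<forall>x\<in>frac D - {0}. \<forall>y\<in>frac D - {0}.
            v (x * y) = v x + v y \<and> (x + y \<noteq> 0 \<longrightarrow> v (x + y) \<ge> min (v x) (v y))) \<and>
        v ` (frac D - {0}) = UNIV \<and>
        D = insert 0 {x \<in> frac D - {0}. v x \<ge> 0})"

definition dominates :: "'a::field set \<Rightarrow> 'a set \<Rightarrow> bool" where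
  "dominates D S \<longleftrightarrow> local_ring D \<and> local_ring S \<and> S \<subseteq> D \<and>
     maxideal D \<inter> S = maxideal S"

end

theory Submission
  imports Defs
begin



definition unitin :: "'a::field set \<Rightarrow> 'a \<Rightarrow> bool" where
  "unitin A y \<longleftrightarrow> y \<in> A \<and> y \<noteq> 0 \<and> inverse y \<in> A"

lemma sr0: "subring A \<Longrightarrow> 0 \<in> A" by (simp add: subring_def)
lemma sr1: "subring A \<Longrightarrow> 1 \<in> A" by (simp add: subring_def)
lemma sradd: "subring A \<Longrightarrow> x \<in> A \<Longrightarrow> y \<in> A \<Longrightarrow> x + y \<in> A" by (simp add: subring_def)
lemma srmult: "subring A \<Longrightarrow> x \<in> A \<Longrightarrow> y \<in> A \<Longrightarrow> x * y \<in> A" by (simp add: subring_def)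
lemma srneg: "subring A \<Longrightarrow> x \<in> A \<Longrightarrow> - x \<in> A" by (simp add: subring_def)
lemma srdiff: "subring A \<Longrightarrow> x \<in> A \<Longrightarrow> y \<in> A \<Longrightarrow> x - y \<in> A"
  using sradd srneg by (metis diff_conv_add_uminus)
lemma srpow: "subring A \<Longrightarrow> x \<in> A \<Longrightarrow> x ^ n \<in> A"
  by (induction n) (auto intro: sr1 srmult)
lemma srsum: assumes "subring A" "finite F" "\<And>x. x \<in> F \<Longrightarrow> f x \<in> A" shows "sum f F \<in> A"
  using assms(2,3) by (induction F rule: finite_induct) (auto intro: sr0[OF assms(1)] sradd[OF assms(1)])

lemma ideal_sub: "ideal_of A I \<Longrightarrow> x \<in> I \<Longrightarrow> x \<in> A" unfolding ideal_of_def by (erule conjE) (erule subsetD)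
lemma ideal_subset: "ideal_of A I \<Longrightarrow> I \<subseteq> A" using ideal_sub by (intro subsetI)
lemma ideal_0: "ideal_of A I \<Longrightarrow> 0 \<in> I" unfolding ideal_of_def by simp
lemma ideal_add: "ideal_of A I \<Longrightarrow> x \<in> I \<Longrightarrow> y \<in> I \<Longrightarrow> x + y \<in> I" unfolding ideal_of_def by simp
lemma ideal_mul: "ideal_of A I \<Longrightarrow> a \<in> A \<Longrightarrow> x \<in> I \<Longrightarrow> a * x \<in> I" unfolding ideal_of_def by simp
lemma mi_ideal: "max_ideal A I \<Longrightarrow> ideal_of A I" unfolding max_ideal_def by simp
lemma mi_ne: "max_ideal A I \<Longrightarrow> I \<noteq> A" unfolding max_ideal_def by simp
lemma mi_max: "max_ideal A I \<Longrightarrow> ideal_of A J \<Longrightarrow> I \<subseteq> J \<Longrightarrow> J \<noteq> A \<Longrightarrow> J = I"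
  unfolding max_ideal_def by blast
lemma local_sub: "local_ring A \<Longrightarrow> subring A" unfolding local_ring_def by simp

lemma ideal_one: assumes "subring A" "ideal_of A I" "1 \<in> I" shows "I = A"
proof
  show "I \<subseteq> A" using assms(2) by (rule ideal_subset)
  show "A \<subseteq> I"
  proof
    fix a assume "a \<in> A"
    then have "a * 1 \<in> I" using assms(2,3) ideal_mul by blast
    then show "a \<in> I" by simp
  qed
qed

lemma ideal_nonunit: "subring A \<Longrightarrow> ideal_of A I \<Longrightarrow> I \<noteq> A \<Longrightarrow> y \<in> I \<Longrightarrow> \<not> unitin A y"
proof
  assume a: "subring A" "ideal_of A I" "I \<noteq> A" "y \<in> I" "unitin A y"
  have "inverse y \<in> A" "y \<noteq> 0" using a(5) unitin_def by auto
  then have "inverse y * y \<in> I" using a(2,4) ideal_mul by blast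
  then have "1 \<in> I" using \<open>y \<noteq> 0\<close> by simp
  then have "I = A" using ideal_one a(1,2) by blast
  then show False using a(3) by blast
qed

lemma local_max: "local_ring A \<Longrightarrow> max_ideal A (maxideal A)"
  unfolding local_ring_def maxideal_def by (metis theI')

lemma local_maxideal_sub: "local_ring A \<Longrightarrow> maxideal A \<subseteq> A"
  using local_max mi_ideal ideal_subset by blast

lemma local_nonunit_max: assumes "local_ring A" "y \<in> A" "\<not> unitin A y"
  shows "y \<in> maxideal A"
proof -
  have sA: "subring A" using assms(1) by (rule local_sub)
  define J0 where "J0 = {a * y | a. a \<in> A}"
  define F where "F = {J. ideal_of A J \<and> J0 \<subseteq> J \<and> 1 \<notin> J}"
  have J0i: "ideal_of A J0" unfolding ideal_of_def J0_def
  proof (intro conjI)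
    show "{a * y |a. a \<in> A} \<subseteq> A" using sA assms(2) srmult by blast
    show "0 \<in> {a * y |a. a \<in> A}" using sA sr0 by force
    show "\<forall>x\<in>{a * y |a. a \<in> A}. \<forall>ya\<in>{a * y |a. a \<in> A}. x + ya \<in> {a * y |a. a \<in> A}"
    proof (intro ballI)
      fix x z assume "x \<in> {a * y |a. a \<in> A}" "z \<in> {a * y |a. a \<in> A}"
      then obtain a b where "a \<in> A" "b \<in> A" "x = a * y" "z = b * y" by blast
      then have "x + z = (a + b) * y" "a + b \<in> A" using sA sradd by (auto simp: distrib_right)
      then show "x + z \<in> {a * y |a. a \<in> A}" by blast
    qed
    show "\<forall>a\<in>A. \<forall>x\<in>{a * y |a. a \<in> A}. a * x \<in> {a * y |a. a \<in> A}"
    proof (intro ballI)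
      fix b x assume "b \<in> A" "x \<in> {a * y |a. a \<in> A}"
      then obtain a where "a \<in> A" "x = a * y" by blast
      then have "b * x = (b * a) * y" "b * a \<in> A" using sA srmult \<open>b \<in> A\<close> by auto
      then show "b * x \<in> {a * y |a. a \<in> A}" by blast
    qed
  qed
  have "1 \<notin> J0"
  proof
    assume "1 \<in> J0"
    then obtain a where "a \<in> A" "1 = a * y" unfolding J0_def by blast
    then have "y \<noteq> 0" "inverse y = a" by (auto intro: inverse_unique simp: mult.commute)
    then show False using assms \<open>a \<in> A\<close> by (auto simp: unitin_def)
  qed
  then have "J0 \<in> F" using J0i F_def by blast
  have "\<exists>M\<in>F. \<forall>X\<in>F. M \<subseteq> X \<longrightarrow> X = M"
  proof (rule subset_Zorn_nonempty)
    show "F \<noteq> {}" using \<open>J0 \<in> F\<close> by blast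
    fix C assume C: "C \<noteq> {}" "subset.chain F C"
    then have CF: "C \<subseteq> F" and Cc: "\<forall>X\<in>C. \<forall>Y\<in>C. X \<subseteq> Y \<or> Y \<subseteq> X"
      by (auto simp: subset_chain_def)
    show "\<Union>C \<in> F" unfolding F_def
    proof (intro CollectI conjI)
      show "ideal_of A (\<Union>C)" unfolding ideal_of_def
      proof (intro conjI ballI)
        show "\<Union>C \<subseteq> A" using CF unfolding F_def using ideal_subset by blast
        show "0 \<in> \<Union>C" using C CF unfolding F_def using ideal_0 by blast
        fix x z assume "x \<in> \<Union>C" "z \<in> \<Union>C"
        then obtain X Z where XZ: "X \<in> C" "Z \<in> C" "x \<in> X" "z \<in> Z" by blast
        then have "x \<in> X \<union> Z \<and> z \<in> X \<union> Z" by blast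
        moreover have "X \<union> Z = X \<or> X \<union> Z = Z" using Cc XZ by blast
        moreover have "ideal_of A X" "ideal_of A Z" using XZ CF unfolding F_def by auto
        ultimately show "x + z \<in> \<Union>C" using XZ ideal_add by (metis UnionI)
      next
        fix a x assume "a \<in> A" "x \<in> \<Union>C"
        then obtain X where "X \<in> C" "x \<in> X" by blast
        moreover have "ideal_of A X" using \<open>X \<in> C\<close> CF unfolding F_def by auto
        ultimately show "a * x \<in> \<Union>C" using \<open>a \<in> A\<close> ideal_mul by blast
      qed
      show "J0 \<subseteq> \<Union>C" using C CF F_def by blast
      show "1 \<notin> \<Union>C" using CF F_def by blast
    qed
  qed
  then obtain M where M: "M \<in> F" "\<forall>X\<in>F. M \<subseteq> X \<longrightarrow> X = M" by blast
  have "max_ideal A M" unfolding max_ideal_def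
  proof (intro conjI allI impI)
    show "ideal_of A M" using M F_def by blast
    show "M \<noteq> A" using M F_def sA sr1 by blast
    fix J assume J: "ideal_of A J \<and> M \<subseteq> J \<and> J \<noteq> A"
    then have "J \<in> F" using M F_def ideal_one sA by blast
    then show "J = M" using M J by blast
  qed
  then have "M = maxideal A" using assms(1) local_max unfolding local_ring_def by metis
  moreover have "y \<in> J0" unfolding J0_def using sA sr1 by force
  ultimately show ?thesis using M F_def by blast
qed

lemma local_uniq: "local_ring A \<Longrightarrow> max_ideal A I \<Longrightarrow> I = maxideal A"
  using local_max unfolding local_ring_def by metis




lemma unit_mult: "subring A \<Longrightarrow> unitin A u \<Longrightarrow> unitin A w \<Longrightarrow> unitin A (u * w)"
  unfolding unitin_def by (auto intro: srmult simp: inverse_mult_distrib)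

lemma unit_inv: "unitin A u \<Longrightarrow> unitin A (inverse u)"
  unfolding unitin_def by auto

lemma in_frac: "subring A \<Longrightarrow> a \<in> A \<Longrightarrow> a \<in> frac A"
  unfolding frac_def using sr1[of A] by force

lemma pow_unit_imp: assumes sA: "subring A" and xA: "x \<in> A" and w: "w \<in> A"
  and u: "unitin A (x ^ Suc k * w)" shows "unitin A x"
proof -
  let ?u = "x ^ Suc k * w"
  have "?u \<noteq> 0" "inverse ?u \<in> A" using u unfolding unitin_def by blast+
  then have x0: "x \<noteq> 0" by auto
  have "x * (x ^ k * w * inverse ?u) = 1" using \<open>?u \<noteq> 0\<close> by (simp add: field_simps)
  then have e: "inverse x = x ^ k * w * inverse ?u" by (rule inverse_unique)
  have m: "x ^ k * w * inverse ?u \<in> A"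
    using sA xA w \<open>inverse ?u \<in> A\<close> by (auto intro!: srmult srpow)
  have "inverse x \<in> A" using m by (subst e)
  then show ?thesis using xA x0 unfolding unitin_def by blast
qed

locale dvrc =
  fixes A :: "'a::field set" and x :: 'a
  assumes sA: "subring A" and xA: "x \<in> A" and x0: "x \<noteq> 0" and xnu: "\<not> unitin A x"
    and gen: "\<And>y. y \<in> A \<Longrightarrow> \<not> unitin A y \<Longrightarrow> \<exists>s\<in>A. y = x * s"
    and intr: "\<And>y. y \<in> A \<Longrightarrow> y \<noteq> 0 \<Longrightarrow> \<exists>n. \<not> (\<exists>s\<in>A. y = x ^ n * s)"
begin

lemma decomp: assumes y: "y \<in> A" "y \<noteq> 0" shows "\<exists>n u. unitin A u \<and> y = x ^ n * u"
proof -
  define P where "P n \<longleftrightarrow> (\<exists>s\<in>A. y = x ^ n * s)" for n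
  obtain N where N: "\<not> P N" using intr[OF y] P_def by blast
  have bnd: "P m \<Longrightarrow> m < N" for m
  proof (rule ccontr)
    assume "P m" "\<not> m < N"
    then obtain s where s: "s \<in> A" "y = x ^ m * s" using P_def by blast
    have "x ^ m = x ^ N * x ^ (m - N)" using \<open>\<not> m < N\<close> by (simp flip: power_add)
    then have "y = x ^ N * (x ^ (m - N) * s)" using s by (simp add: mult.assoc)
    moreover have "x ^ (m - N) * s \<in> A" using sA xA s by (auto intro: srmult srpow)
    ultimately show False using N P_def by blast
  qed
  have fin: "finite {n. P n}" using bnd by (metis bounded_nat_set_is_finite mem_Collect_eq)
  have P0: "P 0" using y P_def sr1[OF sA] by force
  define n where "n = Max {n. P n}"
  have "P n" unfolding n_def using fin P0 by (metis (mono_tags) Max_in empty_iff mem_Collect_eq)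
  have nmax: "\<not> P (Suc n)" using fin n_def by (metis Max_ge Suc_n_not_le_n mem_Collect_eq)
  obtain s where s: "s \<in> A" "y = x ^ n * s" using \<open>P n\<close> P_def by blast
  have "unitin A s"
  proof (rule ccontr)
    assume "\<not> unitin A s"
    then obtain t where "t \<in> A" "s = x * t" using gen s by blast
    then have "y = x ^ Suc n * t" using s by (simp add: mult.assoc)
    then show False using nmax P_def \<open>t \<in> A\<close> by blast
  qed
  then show ?thesis using s by blast
qed

lemma uniq_nat: assumes "unitin A u" "unitin A w" "x ^ n * u = x ^ m * w" shows "n = m"
proof (rule ccontr)
  assume "n \<noteq> m"
  have key: "False" if "unitin A u" "unitin A w" "x ^ n * u = x ^ m * w" "n < m" for n m u w
  proof -
    obtain k where k: "m = n + Suc k" using less_iff_Suc_add[of n m] \<open>n < m\<close> by auto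
    have "x ^ n * u = x ^ n * (x ^ Suc k * w)" using that(3) k by (simp add: power_add mult.assoc)
    then have "u = x ^ Suc k * w" using x0 by simp
    then have "unitin A x" using pow_unit_imp[OF sA xA, of w k] that unitin_def by auto
    then show False using xnu by blast
  qed
  show False
  proof (cases "n < m")
    case True then show ?thesis using key assms by blast
  next
    case False then have "m < n" using \<open>n \<noteq> m\<close> by simp
    then show ?thesis using key[of w u m n] assms by simp
  qed
qed

lemma frac_decomp: assumes "z \<in> frac A" "z \<noteq> 0" shows "\<exists>k u. unitin A u \<and> z = x powi k * u"
proof -
  obtain a b where ab: "a \<in> A" "b \<in> A" "b \<noteq> 0" "z = a / b" using assms(1) frac_def by blast
  then have "a \<noteq> 0" using assms(2) by auto
  obtain n u where nu: "unitin A u" "a = x ^ n * u" using decomp ab \<open>a \<noteq> 0\<close> by blast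
  obtain m w where mw: "unitin A w" "b = x ^ m * w" using decomp ab by blast
  have "z = x powi (int n - int m) * (u * inverse w)"
    using ab nu mw x0 by (simp add: power_int_diff field_simps)
  moreover have "unitin A (u * inverse w)" using unit_mult[OF sA] unit_inv nu mw by blast
  ultimately show ?thesis by blast
qed

lemma uniq_int: assumes "unitin A u" "unitin A w" "x powi k * u = x powi l * w" shows "k = l"
proof -
  have key: "k = l" if "unitin A u" "unitin A w" "x powi k * u = x powi l * w" "k \<le> l" for k l u w
  proof -
    have "x powi l = x powi k * x ^ nat (l - k)"
      using power_int_add[of x k "l - k"] x0 \<open>k \<le> l\<close> by (simp add: power_int_nonneg_exp)
    then have "x powi k * u = x powi k * (x ^ nat (l - k) * w)" using that(3) by (simp add: mult.assoc)
    then have "x ^ 0 * u = x ^ nat (l - k) * w" using x0 by simp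
    then have "0 = nat (l - k)" using uniq_nat that by blast
    then show ?thesis using \<open>k \<le> l\<close> by simp
  qed
  show ?thesis
  proof (cases "k \<le> l")
    case True then show ?thesis using key assms by blast
  next
    case False then show ?thesis using key[of w u l k] assms by simp
  qed
qed

definition v :: "'a \<Rightarrow> int" where
  "v z = (THE k. \<exists>u. unitin A u \<and> z = x powi k * u)"

lemma v_eq: assumes "unitin A u" "z = x powi k * u" shows "v z = k"
  unfolding v_def
proof (rule the_equality)
  show "\<exists>u. unitin A u \<and> z = x powi k * u" using assms by blast
  fix l assume "\<exists>u. unitin A u \<and> z = x powi l * u"
  then obtain w where "unitin A w" "z = x powi l * w" by blast
  then show "l = k" using uniq_int assms by metis
qed

lemma xpowi_frac: "x powi k \<in> frac A"
proof (cases "k \<ge> 0")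
  case True
  then have "x powi k = x ^ nat k / 1" by (simp add: power_int_nonneg_exp)
  then show ?thesis unfolding frac_def using sA xA srpow sr1 by fastforce
next
  case False
  then have "x powi k = 1 / x ^ nat (- k)"
    by (metis minus_minus neg_0_le_iff_le nat_0_le power_int_minus power_int_of_nat
        inverse_eq_divide le_less not_le)
  then show ?thesis unfolding frac_def using sA xA srpow sr1 x0 by fastforce
qed

theorem isDVR: "DVR A"
  unfolding DVR_def
proof (intro conjI exI[of _ v] ballI impI)
  show "subring A" by (rule sA)
next
  fix z1 z2 assume z: "z1 \<in> frac A - {0}" "z2 \<in> frac A - {0}"
  obtain k u where ku: "unitin A u" "z1 = x powi k * u" using frac_decomp z by blast
  obtain l w where lw: "unitin A w" "z2 = x powi l * w" using frac_decomp z by blast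
  have "z1 * z2 = x powi (k + l) * (u * w)" using ku lw x0 by (simp add: power_int_add field_simps)
  then have "v (z1 * z2) = k + l" using v_eq unit_mult[OF sA ku(1) lw(1)] by blast
  then show "v (z1 * z2) = v z1 + v z2" using v_eq ku lw by simp
  {
    assume ne: "z1 + z2 \<noteq> 0"
    have key: "v (z1 + z2) \<ge> min (v z1) (v z2)" if "unitin A u" "z1 = x powi k * u"
      "unitin A w" "z2 = x powi l * w" "k \<le> l" "z1 + z2 \<noteq> 0" for z1 z2 k l u w
    proof -
      define c where "c = u + x ^ nat (l - k) * w"
      have "x powi l = x powi k * x ^ nat (l - k)"
        using power_int_add[of x k "l - k"] x0 \<open>k \<le> l\<close> by (simp add: power_int_nonneg_exp)
      then have s: "z1 + z2 = x powi k * c" using that c_def by (simp add: field_simps)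
      have "c \<in> A" using c_def that sA xA unitin_def by (auto intro!: sradd srmult srpow)
      moreover have "c \<noteq> 0" using s that by auto
      ultimately obtain n u' where "unitin A u'" "c = x ^ n * u'" using decomp by blast
      then have "z1 + z2 = x powi (k + int n) * u'" using s x0 by (simp add: power_int_add)
      then have "v (z1 + z2) = k + int n" using v_eq \<open>unitin A u'\<close> by blast
      moreover have "v z1 = k" "v z2 = l" using v_eq that by auto
      ultimately show ?thesis using \<open>k \<le> l\<close> by simp
    qed
    show "v (z1 + z2) \<ge> min (v z1) (v z2)"
    proof (cases "k \<le> l")
      case True then show ?thesis using key ku lw ne by blast
    next
      case False
      then have "v (z2 + z1) \<ge> min (v z2) (v z1)" using key[of w z2 l u z1 k] ku lw ne by (simp add: add.commute)
      then show ?thesis by (simp add: add.commute min.commute)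
    qed
  }
next
  show "v ` (frac A - {0}) = UNIV"
  proof -
    have "v ` (frac A - {0}) \<supseteq> UNIV"
    proof
      fix k :: int
      have "x powi k \<noteq> 0" using x0 by simp
      moreover have "unitin A 1" using sr1[OF sA] unfolding unitin_def by simp
      moreover have "v (x powi k) = k" using v_eq[OF \<open>unitin A 1\<close>, of "x powi k" k] by simp
      moreover have "x powi k \<in> frac A" by (rule xpowi_frac)
      ultimately have "x powi k \<in> frac A - {0}" "k = v (x powi k)" by auto
      then show "k \<in> v ` (frac A - {0})" by (rule image_eqI[rotated])
    qed
    then show ?thesis by blast
  qed
next
  show "A = insert 0 {z \<in> frac A - {0}. 0 \<le> v z}"
  proof
    show "A \<subseteq> insert 0 {z \<in> frac A - {0}. 0 \<le> v z}"
    proof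
      fix y assume y: "y \<in> A"
      show "y \<in> insert 0 {z \<in> frac A - {0}. 0 \<le> v z}"
      proof (cases "y = 0")
        case False
        then obtain n u where "unitin A u" "y = x ^ n * u" using decomp y by blast
        then have "v y = int n" using v_eq by (metis power_int_of_nat)
        then show ?thesis using in_frac[OF sA y] False by simp
      qed simp
    qed
    show "insert 0 {z \<in> frac A - {0}. 0 \<le> v z} \<subseteq> A"
    proof
      fix z assume z: "z \<in> insert 0 {z \<in> frac A - {0}. 0 \<le> v z}"
      show "z \<in> A"
      proof (cases "z = 0")
        case True then show ?thesis using sr0[OF sA] by simp
      next
        case False
        then have zf: "z \<in> frac A" "0 \<le> v z" using z by auto
        obtain k u where ku: "unitin A u" "z = x powi k * u" using frac_decomp zf False by blast
        then have "v z = k" using v_eq by blast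
        then have "z = x ^ nat k * u" using ku zf by (simp add: power_int_nonneg_exp)
        then show ?thesis using sA xA ku unitin_def by (auto intro!: srmult srpow)
      qed
    qed
  qed
qed

end



lemma frac_mult: "subring A \<Longrightarrow> z \<in> frac A \<Longrightarrow> w \<in> frac A \<Longrightarrow> z * w \<in> frac A"
  unfolding frac_def
proof (clarify)
  fix a b c d assume "subring A" "a \<in> A" "b \<in> A" "b \<noteq> 0" "c \<in> A" "d \<in> A" "d \<noteq> 0"
  then show "\<exists>a' b'. a / b * (c / d) = a' / b' \<and> a' \<in> A \<and> b' \<in> A \<and> b' \<noteq> 0"
    by (intro exI[of _ "a*c"] exI[of _ "b*d"]) (auto intro: srmult)
qed

lemma frac_inv: "subring A \<Longrightarrow> z \<in> frac A \<Longrightarrow> z \<noteq> 0 \<Longrightarrow> inverse z \<in> frac A"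
  unfolding frac_def
proof (clarify)
  fix a b assume "subring A" "a \<in> A" "b \<in> A" "b \<noteq> 0" "a / b \<noteq> 0"
  then show "\<exists>a' b'. inverse (a / b) = a' / b' \<and> a' \<in> A \<and> b' \<in> A \<and> b' \<noteq> 0"
    by (intro exI[of _ b] exI[of _ a]) auto
qed

locale dvr =
  fixes D :: "'a::field set" and v :: "'a \<Rightarrow> int"
  assumes sD: "subring D"
    and vm: "\<And>x y. x \<in> frac D - {0} \<Longrightarrow> y \<in> frac D - {0} \<Longrightarrow> v (x * y) = v x + v y"
    and vD: "D = insert 0 {x \<in> frac D - {0}. v x \<ge> 0}"
begin

lemma v1: "v 1 = 0"
  using vm[of 1 1] in_frac[OF sD sr1[OF sD]] by simp

lemma vpos: "y \<in> D \<Longrightarrow> y \<noteq> 0 \<Longrightarrow> v y \<ge> 0"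
  using vD by blast

lemma vinv: "z \<in> frac D \<Longrightarrow> z \<noteq> 0 \<Longrightarrow> v (inverse z) = - v z"
  using vm[of z "inverse z"] frac_inv[OF sD] v1 by simp

lemma in_D: assumes "z \<in> frac D" "z \<noteq> 0" "v z \<ge> 0" shows "z \<in> D"
proof -
  have "z \<in> insert 0 {x \<in> frac D - {0}. v x \<ge> 0}" using assms by simp
  then show ?thesis by (subst vD)
qed

lemma unit_iff: assumes "y \<in> D" "y \<noteq> 0" shows "unitin D y \<longleftrightarrow> v y = 0"
proof
  assume "unitin D y"
  then have "inverse y \<in> D" unfolding unitin_def by blast
  then have "v (inverse y) \<ge> 0" using vpos assms by simp
  then show "v y = 0" using vinv in_frac[OF sD assms(1)] assms vpos by fastforce
next
  assume "v y = 0"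
  then have "v (inverse y) = 0" using vinv in_frac[OF sD assms(1)] assms by simp
  moreover have "inverse y \<in> frac D" using frac_inv[OF sD in_frac[OF sD assms(1)]] assms by simp
  ultimately have "inverse y \<in> D" using in_D assms(2) by simp
  then show "unitin D y" using assms unitin_def by blast
qed

lemma vdiv: assumes "a \<in> frac D" "b \<in> frac D" "a \<noteq> 0" "b \<noteq> 0" shows "v (b / a) = v b - v a"
proof -
  have "b / a \<in> frac D" using frac_mult[OF sD assms(2) frac_inv[OF sD assms(1,3)]]
    by (simp add: divide_inverse)
  moreover have "b / a \<noteq> 0" using assms by simp
  ultimately have "v (b / a * a) = v (b / a) + v a" using assms(1,3) by (intro vm) auto
  then show ?thesis using assms by simp
qed


end

lemma DVR_dvr: assumes "DVR D" shows "\<exists>v. dvr D v"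
proof -
  obtain v :: "'a \<Rightarrow> int" where sub: "subring D" and m: "\<forall>x\<in>frac D - {0}. \<forall>y\<in>frac D - {0}.
            v (x * y) = v x + v y \<and> (x + y \<noteq> 0 \<longrightarrow> v (x + y) \<ge> min (v x) (v y))"
     and d: "D = insert 0 {x \<in> frac D - {0}. v x \<ge> 0}" using assms[unfolded DVR_def] by blast
  have "dvr D v"
  proof
    show "subring D" by (rule sub)
    show "\<And>x y. x \<in> frac D - {0} \<Longrightarrow> y \<in> frac D - {0} \<Longrightarrow> v (x * y) = v x + v y"
      using m by blast
    show "D = insert 0 {x \<in> frac D - {0}. v x \<ge> 0}" by (rule d)
  qed
  then show ?thesis by blast
qed

lemma span_single: assumes "subring A" "a \<in> A" shows "span A {a} = {c * a | c. c \<in> A}"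
proof
  show "span A {a} \<subseteq> {c * a | c. c \<in> A}"
  proof
    fix z assume "z \<in> span A {a}"
    then obtain F c where Fc: "finite F" "F \<subseteq> {a}" "\<forall>x\<in>F. c x \<in> A" "z = (\<Sum>x\<in>F. c x * x)"
      unfolding span_def by blast
    show "z \<in> {c * a | c. c \<in> A}"
    proof (cases "F = {}")
      case True then show ?thesis using Fc sr0[OF assms(1)] by force
    next
      case False then have "F = {a}" using Fc by blast
      then show ?thesis using Fc by auto
    qed
  qed
  show "{c * a | c. c \<in> A} \<subseteq> span A {a}"
  proof
    fix z assume "z \<in> {c * a | c. c \<in> A}"
    then obtain c where "c \<in> A" "z = c * a" by blast
    then show "z \<in> span A {a}" unfolding span_def
      by (intro CollectI exI[of _ "{a}"] exI[of _ "\<lambda>_. c"]) auto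
  qed
qed

lemma span_empty: "span A {} = {0}"
  unfolding span_def by auto

lemma DVR_noeth: assumes "DVR D" shows "noetherian D"
proof -
  obtain v where dv: "dvr D v" using DVR_dvr[OF assms] by blast
  interpret dvr D v by (rule dv)
  show ?thesis unfolding noetherian_def
  proof (intro conjI allI impI)
    show "subring D" by (rule sD)
    fix I assume I: "ideal_of D I"
    show "\<exists>F. finite F \<and> F \<subseteq> I \<and> I = span D F"
    proof (cases "I \<subseteq> {0}")
      case True
      then have "I = {0}" using I ideal_0 by blast
      then show ?thesis using span_empty by (intro exI[of _ "{}"]) auto
    next
      case False
      then obtain b0 where b0: "b0 \<in> I" "b0 \<noteq> 0" by blast
      define f where "f b = nat (v b)" for b
      obtain a where a: "a \<in> I" "a \<noteq> 0" "\<And>b. b \<in> I \<Longrightarrow> b \<noteq> 0 \<Longrightarrow> f a \<le> f b"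
        using ex_has_least_nat[of "\<lambda>b. b \<in> I \<and> b \<noteq> 0" b0 f] b0 by blast
      have aD: "a \<in> D" using a I ideal_sub by blast
      have "I = span D {a}"
      proof
        show "I \<subseteq> span D {a}"
        proof
          fix b assume b: "b \<in> I"
          have bD: "b \<in> D" using b I ideal_sub by blast
          show "b \<in> span D {a}"
          proof (cases "b = 0")
            case True then show ?thesis using span_single[OF sD aD] sr0[OF sD] by force
          next
            case False
            have "f a \<le> f b" using a b False by blast
            moreover have "v a \<ge> 0" "v b \<ge> 0" using vpos aD bD a(2) False by auto
            ultimately have "v a \<le> v b" unfolding f_def by simp
            then have "v (b / a) \<ge> 0" using vdiv in_frac[OF sD] aD bD a False by simp
            moreover have "b / a \<in> frac D"
              using frac_mult[OF sD in_frac[OF sD bD] frac_inv[OF sD in_frac[OF sD aD]]] a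
              by (simp add: divide_inverse)
            ultimately have "b / a \<in> D" using in_D a False by simp
            moreover have "b = (b / a) * a" using a by simp
            ultimately show ?thesis using span_single[OF sD aD] by blast
          qed
        qed
        show "span D {a} \<subseteq> I"
        proof
          fix z assume "z \<in> span D {a}"
          then obtain c where "c \<in> D" "z = c * a" using span_single[OF sD aD] by blast
          then show "z \<in> I" using ideal_mul[OF I] a(1) by simp
        qed
      qed
      then show ?thesis using a by (intro exI[of _ "{a}"]) auto
    qed
  qed
qed




lemma span_mult_sub: assumes sA: "subring A" and F: "finite F" "\<And>f. f \<in> F \<Longrightarrow> \<exists>e\<in>A. f = e * a"
  shows "span A F \<subseteq> {d * a | d. d \<in> A}"
proof
  fix z assume "z \<in> span A F"
  then obtain G c where Gc: "finite G" "G \<subseteq> F" "\<forall>x\<in>G. c x \<in> A" "z = (\<Sum>x\<in>G. c x * x)"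
    unfolding span_def by blast
  define e where "e f = (SOME e. e \<in> A \<and> f = e * a)" for f
  have e: "e f \<in> A \<and> f = e f * a" if "f \<in> G" for f
  proof -
    have "\<exists>e. e \<in> A \<and> f = e * a" using F(2) that Gc(2) by blast
    then show ?thesis unfolding e_def by (rule someI_ex)
  qed
  have "z = (\<Sum>x\<in>G. c x * (e x * a))" unfolding Gc(4)
  proof (rule sum.cong[OF refl])
    fix x assume "x \<in> G"
    then have "x = e x * a" using e by blast
    then show "c x * x = c x * (e x * a)" by (rule arg_cong[where f="\<lambda>t. c x * t"])
  qed
  also have "\<dots> = (\<Sum>x\<in>G. c x * e x) * a" by (simp add: sum_distrib_right mult.assoc)
  finally have "z = (\<Sum>x\<in>G. c x * e x) * a" .
  moreover have "(\<Sum>x\<in>G. c x * e x) \<in> A"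
  proof (rule srsum[OF sA Gc(1)])
    fix x assume "x \<in> G"
    then have "c x \<in> A" "e x \<in> A" using Gc(3) e by auto
    then show "c x * e x \<in> A" by (rule srmult[OF sA])
  qed
  ultimately show "z \<in> {d * a | d. d \<in> A}" by blast
qed

lemma finite_bound: assumes "finite G" "\<And>g. g \<in> G \<Longrightarrow> \<exists>n::nat. P n g"
  "\<And>n m g. n \<le> m \<Longrightarrow> P n g \<Longrightarrow> P m g" shows "\<exists>M. \<forall>g\<in>G. P M g"
  using assms
proof (induction G rule: finite_induct)
  case empty then show ?case by blast
next
  case (insert g G)
  then obtain M where M: "\<forall>g\<in>G. P M g" by blast
  obtain n where n: "P n g" using insert by blast
  have "\<forall>h\<in>insert g G. P (max M n) h"
    using M n insert.prems(2)[of M "max M n"] insert.prems(2)[of n "max M n"] by auto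
  then show ?case by blast
qed

lemma ideal_one': "ideal_of A I \<Longrightarrow> 1 \<in> I \<Longrightarrow> I = A"
  by (metis ideal_mul ideal_subset mult.right_neutral subsetI subset_antisym)

lemma zero_span: "0 \<in> span A X"
  unfolding span_def by (rule CollectI, rule exI[of _ "{}"], auto)

lemma lqt_facts: assumes "local_quadratic_transform A T"
  shows "\<exists>x. x \<in> maxideal A \<and> x \<noteq> 0 \<and> (\<forall>y\<in>maxideal A. y / x \<in> T \<and> \<not> unitin T y)"
proof -
  obtain x q where xq: "x \<in> maxideal A"
    "x \<notin> span A {y * z | y z. y \<in> maxideal A \<and> z \<in> maxideal A}"
    "prime_ideal (ring_adj A ((\<lambda>y. y / x) ` maxideal A)) q" "maxideal A \<subseteq> q"
    "T = localize (ring_adj A ((\<lambda>y. y / x) ` maxideal A)) q"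
    using assms unfolding local_quadratic_transform_def by blast
  define B where "B = ring_adj A ((\<lambda>y. y / x) ` maxideal A)"
  have x0: "x \<noteq> 0"
  proof
    assume "x = 0"
    then show False using xq(2) zero_span by blast
  qed
  have Bsup: "A \<union> (\<lambda>y. y / x) ` maxideal A \<subseteq> B" unfolding B_def ring_adj_def by blast
  have B1: "1 \<in> B" unfolding B_def ring_adj_def subring_def by blast
  have qi: "ideal_of B q" "q \<noteq> B" using xq(3) B_def prime_ideal_def by auto
  have q1: "1 \<notin> q" using qi ideal_one' by blast
  have BT: "b \<in> T" if "b \<in> B" for b
  proof -
    have "b = b / 1" by simp
    then show ?thesis using xq(5) B_def that B1 q1 unfolding localize_def by blast
  qed
  have "y / x \<in> T \<and> \<not> unitin T y" if y: "y \<in> maxideal A" for y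
  proof
    show "y / x \<in> T" using BT Bsup y by blast
    show "\<not> unitin T y"
    proof
      assume "unitin T y"
      then have "y \<noteq> 0" "inverse y \<in> T" unfolding unitin_def by auto
      then obtain b c where bc: "b \<in> B" "c \<in> B" "c \<notin> q" "inverse y = b / c"
        using xq(5) B_def unfolding localize_def by blast
      have "c \<noteq> 0" using bc(3) qi(1) ideal_0 by blast
      then have "c = b * y" using bc(4) \<open>y \<noteq> 0\<close> by (simp add: field_simps)
      moreover have "b * y \<in> q" using qi(1) bc(1) y xq(4) ideal_mul by blast
      ultimately show False using bc(3) by simp
    qed
  qed
  then show ?thesis using xq(1) x0 by blast
qed

locale qseq =
  fixes R :: "nat \<Rightarrow> 'a::field set" and S :: "'a set"
  assumes reg: "\<forall>i. regular_local (R i)"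
    and lqt: "\<forall>i. local_quadratic_transform (R i) (R (Suc i))"
    and sub: "\<forall>i. R i \<subset> R (Suc i)"
    and Sdef: "S = (\<Union>i. R i)"
begin

lemma loc: "local_ring (R i)" using reg regular_local_def by blast
lemma sR: "subring (R i)" using loc by (rule local_sub)

lemma mono: "i \<le> j \<Longrightarrow> R i \<subseteq> R j"
proof (induction j rule: dec_induct)
  case (step n) then show ?case using sub by blast
qed simp

lemma RS: "R i \<subseteq> S" using Sdef by blast

definition x :: "nat \<Rightarrow> 'a" where
  "x i = (SOME t. t \<in> maxideal (R i) \<and> t \<noteq> 0 \<and>
      (\<forall>y\<in>maxideal (R i). y / t \<in> R (Suc i) \<and> \<not> unitin (R (Suc i)) y))"

lemma x_prop: "x i \<in> maxideal (R i) \<and> x i \<noteq> 0 \<and>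
      (\<forall>y\<in>maxideal (R i). y / x i \<in> R (Suc i) \<and> \<not> unitin (R (Suc i)) y)"
proof -
  have "\<exists>t. t \<in> maxideal (R i) \<and> t \<noteq> 0 \<and>
      (\<forall>y\<in>maxideal (R i). y / t \<in> R (Suc i) \<and> \<not> unitin (R (Suc i)) y)"
    using lqt_facts lqt by blast
  then show ?thesis unfolding x_def by (rule someI_ex)
qed

lemma unit_step: "y \<in> R i \<Longrightarrow> unitin (R (Suc i)) y \<longleftrightarrow> unitin (R i) y"
proof
  assume y: "y \<in> R i" "unitin (R (Suc i)) y"
  show "unitin (R i) y"
  proof (rule ccontr)
    assume "\<not> unitin (R i) y"
    then have "y \<in> maxideal (R i)" using local_nonunit_max loc y by blast
    then show False using x_prop y by blast
  qed
next
  assume "y \<in> R i" "unitin (R i) y" then show "unitin (R (Suc i)) y"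
  proof -
    have "R i \<subseteq> R (Suc i)" using sub by blast
    then show ?thesis using \<open>unitin (R i) y\<close> unfolding unitin_def by blast
  qed
qed

lemma unit_le: "i \<le> j \<Longrightarrow> y \<in> R i \<Longrightarrow> unitin (R j) y \<longleftrightarrow> unitin (R i) y"
proof (induction j rule: dec_induct)
  case (step n)
  then show ?case using unit_step[of y n] mono[of i n] by blast
qed simp

lemma unit_S: assumes "y \<in> R i" shows "unitin S y \<longleftrightarrow> unitin (R i) y"
proof
  assume "unitin S y"
  then obtain k where "inverse y \<in> R k" "y \<noteq> 0" unfolding unitin_def Sdef by blast
  then have "unitin (R (max i k)) y" using mono[of k "max i k"] mono[of i "max i k"] assms
    unfolding unitin_def by auto
  then show "unitin (R i) y" using unit_le[of i "max i k" y] assms by simp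
next
  assume "unitin (R i) y" then show "unitin S y" using RS[of i] unfolding unitin_def by blast
qed

lemma sS: "subring S"
  unfolding subring_def
proof (intro conjI ballI)
  show "0 \<in> S" "1 \<in> S" using RS sR sr0 sr1 by blast+
  fix a b assume "a \<in> S" "b \<in> S"
  then obtain i j where "a \<in> R i" "b \<in> R j" using Sdef by blast
  then have ab: "a \<in> R (max i j)" "b \<in> R (max i j)" using mono[of i "max i j"] mono[of j "max i j"] by auto
  have "a + b \<in> R (max i j)" "a * b \<in> R (max i j)" "- a \<in> R (max i j)"
    using sradd[OF sR ab] srmult[OF sR ab] srneg[OF sR ab(1)] by auto
  then show "a + b \<in> S" "a * b \<in> S" "- a \<in> S" using RS by blast+
qed

definition N where "N = {y \<in> S. \<not> unitin S y}"

lemma nonunit_max: assumes "y \<in> N" "y \<in> R j" shows "y \<in> maxideal (R j)"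
  using assms N_def unit_S local_nonunit_max loc by blast

lemma N_ideal: "ideal_of S N"
  unfolding ideal_of_def
proof (intro conjI ballI)
  show "N \<subseteq> S" using N_def by blast
  have "\<not> unitin S 0" unfolding unitin_def by simp
  then show "0 \<in> N" unfolding N_def using sr0[OF sS] by blast
  fix a b assume ab: "a \<in> N" "b \<in> N"
  then obtain i j where "a \<in> R i" "b \<in> R j" using Sdef N_def by blast
  then have ab': "a \<in> R (max i j)" "b \<in> R (max i j)" using mono[of i "max i j"] mono[of j "max i j"] by auto
  let ?m = "max i j"
  have "a \<in> maxideal (R ?m)" "b \<in> maxideal (R ?m)" using nonunit_max ab ab' by auto
  then have "a + b \<in> maxideal (R ?m)" using mi_ideal[OF local_max[OF loc]] ideal_add by blast
  then have "\<not> unitin (R ?m) (a + b)" "a + b \<in> R ?m"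
    using ideal_nonunit[OF sR mi_ideal[OF local_max[OF loc]] mi_ne[OF local_max[OF loc]]]
      ideal_sub[OF mi_ideal[OF local_max[OF loc]]] by blast+
  then show "a + b \<in> N" using unit_S N_def RS by blast
next
  fix a b assume ab: "a \<in> S" "b \<in> N"
  then obtain i j where "a \<in> R i" "b \<in> R j" using Sdef N_def by blast
  then have ab': "a \<in> R (max i j)" "b \<in> R (max i j)" using mono[of i "max i j"] mono[of j "max i j"] by auto
  let ?m = "max i j"
  have "b \<in> maxideal (R ?m)" using nonunit_max ab ab' by auto
  then have "a * b \<in> maxideal (R ?m)" using ab' mi_ideal[OF local_max[OF loc]] ideal_mul by blast
  then have "\<not> unitin (R ?m) (a * b)" "a * b \<in> R ?m"
    using ideal_nonunit[OF sR mi_ideal[OF local_max[OF loc]] mi_ne[OF local_max[OF loc]]]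
      ideal_sub[OF mi_ideal[OF local_max[OF loc]]] by blast+
  then show "a * b \<in> N" using unit_S N_def RS by blast
qed

lemma N_max: "max_ideal S N"
  unfolding max_ideal_def
proof (intro conjI allI impI)
  show "ideal_of S N" by (rule N_ideal)
  have "1 \<in> S" using sr1[OF sS] .
  moreover have "unitin S 1" unfolding unitin_def using \<open>1 \<in> S\<close> by simp
  ultimately show "N \<noteq> S" unfolding N_def by blast
  fix J assume J: "ideal_of S J \<and> N \<subseteq> J \<and> J \<noteq> S"
  then have "J \<subseteq> N" using ideal_nonunit[OF sS] ideal_subset unfolding N_def by blast
  then show "J = N" using J by blast
qed

lemma S_local: "local_ring S"
  unfolding local_ring_def
proof (intro conjI ex1I)
  show "subring S" by (rule sS)
  show "max_ideal S N" by (rule N_max)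
  fix M assume M: "max_ideal S M"
  then have "M \<subseteq> N" using ideal_nonunit[OF sS mi_ideal mi_ne] ideal_subset[OF mi_ideal] unfolding N_def by blast
  then show "M = N" using mi_max[OF M N_ideal] mi_ne[OF N_max] by blast
qed

lemma maxS: "maxideal S = N"
  using local_uniq[OF S_local N_max] by simp

lemma x_S: "x i \<in> S" using x_prop local_maxideal_sub[OF loc] RS by blast
lemma x_N: "x i \<in> N"
proof -
  have "x i \<in> maxideal (R i)" using x_prop by blast
  then have "\<not> unitin (R i) (x i)" "x i \<in> R i"
    using ideal_nonunit[OF sR mi_ideal[OF local_max[OF loc]] mi_ne[OF local_max[OF loc]]]
      ideal_sub[OF mi_ideal[OF local_max[OF loc]]] by blast+
  then show ?thesis using unit_S RS unfolding N_def by blast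
qed

lemma gen_j: assumes "y \<in> N" "y \<in> R j" shows "y / x j \<in> S" "y = x j * (y / x j)"
  using nonunit_max[OF assms] x_prop[of j] RS by auto

lemma in_some: "y \<in> S \<Longrightarrow> \<exists>m. \<forall>j\<ge>m. y \<in> R j"
  using Sdef mono by blast

end



context qseq begin

lemma x_nonunit: "\<not> unitin S (x i)" using x_N N_def by blast

lemma noeth_DVR: assumes "noetherian S" shows "DVR S"
proof -
  obtain F where F: "finite F" "F \<subseteq> N" "N = span S F"
    using assms N_ideal unfolding noetherian_def by blast
  obtain j where j: "\<forall>f\<in>F. f \<in> R j"
    using finite_bound[OF F(1), of "\<lambda>n f. f \<in> R n"] in_some F(2) N_def mono by blast
  define z where "z = x j"
  have gen: "\<exists>s\<in>S. y = z * s" if "y \<in> S" "\<not> unitin S y" for y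
  proof -
    have "y \<in> N" using that N_def by blast
    then have "y \<in> span S F" using F by blast
    moreover have "\<exists>e\<in>S. f = e * z" if "f \<in> F" for f
      using gen_j[of f j] j that F(2) z_def by (metis mult.commute subsetD)
    ultimately have "y \<in> {d * z | d. d \<in> S}" using span_mult_sub[OF sS F(1)] by blast
    then show ?thesis by (auto simp: mult.commute)
  qed
  have intr: "\<exists>n. \<not> (\<exists>s\<in>S. y = z ^ n * s)" if y: "y \<in> S" "y \<noteq> 0" for y
  proof (rule ccontr)
    assume "\<not> (\<exists>n. \<not> (\<exists>s\<in>S. y = z ^ n * s))"
    then have all: "\<forall>n. \<exists>s\<in>S. y = z ^ n * s" by blast
    have z0: "z \<noteq> 0" using x_prop[of j] unfolding z_def by blast
    define a where "a n = y / z ^ n" for n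
    have aS: "a n \<in> S" for n
    proof -
      obtain s where "s \<in> S" "y = z ^ n * s" using all by blast
      then show ?thesis using a_def z0 by simp
    qed
    have a0: "a n \<noteq> 0" for n using a_def y z0 by simp
    have amono: "a m = z ^ (n - m) * a n" if "m \<le> n" for m n
      using that z0 unfolding a_def by (simp add: field_simps flip: power_add)
    have zS: "z \<in> S" using x_S z_def by blast
    define I where "I = {c * a n | c n. c \<in> S}"
    have I_ideal: "ideal_of S I" unfolding ideal_of_def
    proof (intro conjI ballI)
      show "I \<subseteq> S" unfolding I_def using aS srmult[OF sS] by blast
      show "0 \<in> I" unfolding I_def using sr0[OF sS] by force
      fix p q assume "p \<in> I" "q \<in> I"
      then obtain c n d m where cd: "c \<in> S" "d \<in> S" "p = c * a n" "q = d * a m" unfolding I_def by blast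
      let ?k = "max n m"
      have "p + q = (c * z ^ (?k - n) + d * z ^ (?k - m)) * a ?k"
        using cd amono[of n ?k] amono[of m ?k] by (simp add: algebra_simps)
      moreover have "c * z ^ (?k - n) + d * z ^ (?k - m) \<in> S"
        using cd zS sS by (auto intro!: sradd srmult srpow)
      ultimately show "p + q \<in> I" unfolding I_def by blast
    next
      fix b p assume "b \<in> S" "p \<in> I"
      then obtain c n where "c \<in> S" "p = c * a n" unfolding I_def by blast
      then have "b * p = (b * c) * a n" "b * c \<in> S" using \<open>b \<in> S\<close> srmult[OF sS] by auto
      then show "b * p \<in> I" unfolding I_def by blast
    qed
    obtain G where G: "finite G" "G \<subseteq> I" "I = span S G"
      using assms I_ideal unfolding noetherian_def by blast
    have "\<exists>M. \<forall>g\<in>G. \<exists>e\<in>S. g = e * a M"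
    proof (rule finite_bound[OF G(1)])
      fix g assume "g \<in> G"
      then show "\<exists>n. \<exists>e\<in>S. g = e * a n" using G(2) I_def by blast
    next
      fix n m g assume nm: "n \<le> m" "\<exists>e\<in>S. g = e * a n"
      then obtain e where "e \<in> S" "g = e * a n" by blast
      then have "g = (e * z ^ (m - n)) * a m" using amono[OF nm(1)] by simp
      moreover have "e * z ^ (m - n) \<in> S" using \<open>e \<in> S\<close> zS sS by (auto intro!: srmult srpow)
      ultimately show "\<exists>e\<in>S. g = e * a m" by blast
    qed
    then obtain M where M: "\<forall>g\<in>G. \<exists>e\<in>S. g = e * a M" by blast
    have "a (Suc M) \<in> I" unfolding I_def using sr1[OF sS] by force
    then have "a (Suc M) \<in> {d * a M | d. d \<in> S}" using G(3) span_mult_sub[OF sS G(1)] M by blast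
    then obtain d where d: "d \<in> S" "a (Suc M) = d * a M" by blast
    have "a M = z * a (Suc M)" using amono[of M "Suc M"] by simp
    then have "(d * z) * a (Suc M) = 1 * a (Suc M)" using d(2) by (metis mult.assoc mult_1)
    then have "d * z = 1" using mult_right_cancel[OF a0[of "Suc M"]] by blast
    then have "inverse z = d" using inverse_unique by (metis mult.commute)
    then have "unitin S z" using zS z0 d unfolding unitin_def by auto
    then show False using x_nonunit z_def by blast
  qed
  interpret dvrc S z
    using sS x_S x_prop x_nonunit gen intr unfolding z_def by unfold_locales auto
  show ?thesis by (rule isDVR)
qed

lemma dom_DVR: assumes "DVR D" "dominates D S" shows "DVR S"
proof -
  obtain v where dv: "dvr D v" using DVR_dvr[OF assms(1)] by blast
  interpret dvr D v by (rule dv)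
  have SD: "S \<subseteq> D" and mD: "maxideal D \<inter> S = maxideal S" and lD: "local_ring D"
    using assms(2) dominates_def by auto
  have Dmax: "max_ideal D (maxideal D)" using local_max[OF lD] .
  have S_unit_iff: "unitin S y \<longleftrightarrow> v y = 0" if y: "y \<in> S" "y \<noteq> 0" for y
  proof
    assume "unitin S y"
    then have "unitin D y" using SD unfolding unitin_def by blast
    then show "v y = 0" using unit_iff SD y by blast
  next
    assume "v y = 0"
    then have "unitin D y" using unit_iff SD y by blast
    then have "y \<notin> maxideal D" using ideal_nonunit[OF sD mi_ideal[OF Dmax] mi_ne[OF Dmax]] by blast
    then have "y \<notin> N" using mD maxS y by blast
    then show "unitin S y" using N_def y by blast
  qed
  have vS: "y \<in> S \<Longrightarrow> y \<noteq> 0 \<Longrightarrow> v y \<ge> 0" for y using vpos SD by blast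
  have fD: "y \<in> S \<Longrightarrow> y \<in> frac D" for y using in_frac[OF sD] SD by blast
  have x0: "x i \<noteq> 0" for i using x_prop by blast
  have vx1: "v (x i) \<ge> 1" for i
    using S_unit_iff[OF x_S x0, of i] x_nonunit[of i] vS[OF x_S x0, of i] by linarith
  have vdec: "v (x (Suc i)) \<le> v (x i)" for i
  proof -
    have "x i \<in> N" "x i \<in> R (Suc i)" using x_N x_prop local_maxideal_sub[OF loc] sub by blast+
    then have s: "x i / x (Suc i) \<in> S" "x i = x (Suc i) * (x i / x (Suc i))" using gen_j by auto
    have "x i / x (Suc i) \<noteq> 0" using x0 by simp
    then have "v (x i) = v (x (Suc i)) + v (x i / x (Suc i))"
      using s vm[of "x (Suc i)" "x i / x (Suc i)"] fD x_S x0 by (metis DiffI singletonD)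
    then show ?thesis using vS s(1) \<open>x i / x (Suc i) \<noteq> 0\<close> by fastforce
  qed
  obtain Nn where Nn: "\<And>i. nat (v (x Nn)) \<le> nat (v (x i))"
    using ex_has_least_nat[of "\<lambda>_. True" 0 "\<lambda>i. nat (v (x i))"] by blast
  have vmin: "v (x Nn) \<le> v (x i)" for i using Nn[of i] vx1[of i] vx1[of Nn] by simp
  have veq: "j \<ge> Nn \<Longrightarrow> v (x j) = v (x Nn)" for j
  proof (induction j rule: dec_induct)
    case (step n) then show ?case using vdec[of n] vmin[of "Suc n"] by simp
  qed simp
  define z where "z = x Nn"
  have zS: "z \<in> S" and z0: "z \<noteq> 0" using x_S x0 z_def by auto
  have chain: "j \<ge> Nn \<Longrightarrow> \<exists>t\<in>S. x j = z * t" for j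
  proof (induction j rule: dec_induct)
    case base then show ?case using z_def sr1[OF sS] by force
  next
    case (step n)
    then obtain t where t: "t \<in> S" "x n = z * t" by blast
    have "x n \<in> N" "x n \<in> R (Suc n)" using x_N x_prop local_maxideal_sub[OF loc] sub by blast+
    then have s: "x n / x (Suc n) \<in> S" "x n = x (Suc n) * (x n / x (Suc n))" using gen_j by auto
    let ?s = "x n / x (Suc n)"
    have s0: "?s \<noteq> 0" using x0 by simp
    have "v (x n) = v (x (Suc n)) + v ?s"
      using s vm[of "x (Suc n)" ?s] fD x_S x0 s0 by (metis DiffI singletonD)
    then have "v ?s = 0" using veq[of n] veq[of "Suc n"] step by simp
    then have "unitin S ?s" using S_unit_iff s s0 by blast
    then have "inverse ?s \<in> S" unfolding unitin_def by blast
    moreover have "t \<noteq> 0" using t x0[of n] by auto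
    moreover have "x (Suc n) = z * (t * inverse ?s)" using t x0 z0 \<open>t \<noteq> 0\<close> by (simp add: field_simps)
    ultimately show ?case using srmult[OF sS t(1)] by blast
  qed
  have gen: "\<exists>s\<in>S. y = z * s" if "y \<in> S" "\<not> unitin S y" for y
  proof -
    have yN: "y \<in> N" using that unfolding N_def by blast
    obtain m where m: "\<forall>j\<ge>m. y \<in> R j" using in_some yN unfolding N_def by blast
    let ?j = "max m Nn"
    have g: "y / x ?j \<in> S" "y = x ?j * (y / x ?j)" using gen_j[OF yN] m by auto
    have "Nn \<le> ?j" by simp
    then obtain t where t: "t \<in> S" "x ?j = z * t" using chain by blast
    have "y = z * (t * (y / x ?j))" using g(2) t(2) by (metis mult.assoc)
    then show ?thesis using srmult[OF sS t(1) g(1)] by blast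
  qed
  have vpow: "v (z ^ n) = int n * v z" for n
  proof (induction n)
    case 0 then show ?case using v1 by simp
  next
    case (Suc n)
    have "z ^ n \<in> frac D" "z ^ n \<noteq> 0" using fD srpow[OF sS zS] z0 by auto
    then have "v (z * z ^ n) = v z + v (z ^ n)" using fD[OF zS] z0 by (intro vm) auto
    then show ?case using Suc by (simp add: algebra_simps)
  qed
  have intr: "\<exists>n. \<not> (\<exists>s\<in>S. y = z ^ n * s)" if y: "y \<in> S" "y \<noteq> 0" for y
  proof (rule ccontr)
    assume "\<not> ?thesis"
    then obtain s where s: "s \<in> S" "y = z ^ nat (v y + 1) * s" by blast
    let ?n = "nat (v y + 1)"
    have s0: "s \<noteq> 0" using s y by auto
    have "z ^ ?n \<in> frac D" "z ^ ?n \<noteq> 0" using fD srpow[OF sS zS] z0 by auto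
    moreover have "s \<in> frac D" using fD s(1) by blast
    ultimately have "v (z ^ ?n * s) = v (z ^ ?n) + v s" using s0 by (intro vm) auto
    then have "v y = v (z ^ ?n) + v s" using s(2) by simp
    also have "\<dots> = int ?n * v z + v s" using vpow by simp
    finally have "v y = int ?n * v z + v s" .
    moreover have "v s \<ge> 0" using vS s s0 by blast
    moreover have "v z \<ge> 1" using vx1 z_def by blast
    moreover have "int ?n = v y + 1" using vS y by simp
    moreover have "int ?n * v z \<ge> int ?n * 1"
      using mult_left_mono[of 1 "v z" "int ?n"] \<open>v z \<ge> 1\<close> by simp
    ultimately show False by linarith
  qed
  interpret dvrc S z
    using sS zS z0 x_nonunit gen intr unfolding z_def by unfold_locales auto
  show ?thesis by (rule isDVR)
qed

end

theorem corollary3p9: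
  fixes R :: "nat \<Rightarrow> 'a::field set" and S :: "'a set"
  assumes "\<forall>i. regular_local (R i) \<and> krull_dim (R i) \<ge> 2"
    and "\<forall>i. local_quadratic_transform (R i) (R (Suc i))"
    and "\<forall>i. R i \<subset> R (Suc i)"
    and "S = (\<Union>i. R i)"
  shows "((\<exists>D. DVR D \<and> dominates D S) \<longleftrightarrow> DVR S) \<and> (DVR S \<longleftrightarrow> noetherian S)"
proof -
  interpret qseq R S using assms by unfold_locales auto
  have "dominates S S" unfolding dominates_def using S_local local_maxideal_sub[OF S_local] by blast
  then show ?thesis using dom_DVR noeth_DVR DVR_noeth by blast
qed



end
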